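(* Let $z_1,\dots,z_{\ell+1}$ be the generators of the $*$-algebra $\mathcal{A}(S^{2\ell+1}_q)$. Then for every $N\in\mathbb{N}$, $$\sum_{j_1+\dots+j_{\ell+1}=N}[j_1,\dots,j_{\ell+1}]!\;z_1^{j_1}\cdots z_{\ell+1}^{j_{\ell+1}}\big(z_1^{j_1}\cdots z_{\ell+1}^{j_{\ell+1}}\big)^*=1,$$ the sum running over $(j_1,\dots,j_{\ell+1})\in\mathbb{N}^{\ell+1}$.
   Context: $0<q<1$, $\ell\ge1$, $[x]=\frac{q^x-q^{-x}}{q-q^{-1}}$, $[n]!=[n]\cdots[1]$, $[0]!=1$, and $[j_1,\dots,j_{\ell+1}]!:=\frac{[j_1+\dots+j_{\ell+1}]!}{[j_1]!\cdots[j_{\ell+1}]!}q^{-\sum_{r<s}j_rj_s}$. $\mathcal{A}(S^{2\ell+1}_q)$ is the $*$-algebra generated by $z_i,z_i^*$ ($1\le i\le\ell+1$) with relations $z_iz_j=qz_jz_i$ ($i<j$), $z_i^*z_j=qz_jz_i^*$ ($i\ne j$), $[z_1^*,z_1]=0$, $[z_{i+1}^*,z_{i+1}]=(1-q^2)\sum_{j=1}^iz_jz_j^*$ ($1\le i\le\ell$), and $\sum_{i=1}^{\ell+1}z_iz_i^*=1$. *)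

theory Defs
  imports Complex_Main
begin

definition qnum :: "real \<Rightarrow> nat \<Rightarrow> real" where
  "qnum q n = (q ^ n - inverse q ^ n) / (q - inverse q)"

definition qfact :: "real \<Rightarrow> nat \<Rightarrow> real" where
  "qfact q n = (\<Prod>k\<in>{1..n}. qnum q k)"

definition qmultinom :: "real \<Rightarrow> nat \<Rightarrow> (nat \<Rightarrow> nat) \<Rightarrow> real" where
  "qmultinom q l j =
     qfact q (\<Sum>r\<in>{1..l+1}. j r) / (\<Prod>r\<in>{1..l+1}. qfact q (j r))
     * inverse q ^ (\<Sum>r\<in>{1..l+1}. \<Sum>s\<in>{r<..l+1}. j r * j s)"

text \<open>A *-operation on a real algebra (covers complex *-algebras, viewed as real algebras):
  additive, real-linear, anti-multiplicative, involutive.\<close>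
definition is_star :: "('a::real_algebra_1 \<Rightarrow> 'a) \<Rightarrow> bool" where
  "is_star st \<longleftrightarrow>
     (\<forall>x y. st (x + y) = st x + st y) \<and>
     (\<forall>r x. st (scaleR r x) = scaleR r (st x)) \<and>
     (\<forall>x y. st (x * y) = st y * st x) \<and>
     (\<forall>x. st (st x) = x) \<and> st 1 = 1"

definition sphere_rels ::
  "real \<Rightarrow> nat \<Rightarrow> ('a::real_algebra_1 \<Rightarrow> 'a) \<Rightarrow> (nat \<Rightarrow> 'a) \<Rightarrow> bool" where
  "sphere_rels q l st z \<longleftrightarrow>
     (\<forall>i\<in>{1..l+1}. \<forall>j\<in>{1..l+1}. i < j \<longrightarrow> z i * z j = scaleR q (z j * z i)) \<and>
     (\<forall>i\<in>{1..l+1}. \<forall>j\<in>{1..l+1}. i \<noteq> j \<longrightarrow> st (z i) * z j = scaleR q (z j * st (z i))) \<and>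
     st (z 1) * z 1 = z 1 * st (z 1) \<and>
     (\<forall>i\<in>{1..l}. st (z (i+1)) * z (i+1) - z (i+1) * st (z (i+1))
          = scaleR (1 - q\<^sup>2) (\<Sum>j\<in>{1..i}. z j * st (z j))) \<and>
     (\<Sum>i\<in>{1..l+1}. z i * st (z i)) = 1"

definition monom :: "nat \<Rightarrow> (nat \<Rightarrow> 'a::monoid_mult) \<Rightarrow> (nat \<Rightarrow> nat) \<Rightarrow> 'a" where
  "monom l z j = prod_list (map (\<lambda>k. z k ^ j k) [1..<l+2])"

definition multi_indices :: "nat \<Rightarrow> nat \<Rightarrow> (nat \<Rightarrow> nat) set" where
  "multi_indices l N = {j. (\<forall>k. k \<notin> {1..l+1} \<longrightarrow> j k = 0) \<and> (\<Sum>k\<in>{1..l+1}. j k) = N}"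

end

theory Submission imports Defs begin

definition cm :: "'a::ring_1 \<Rightarrow> 'a \<Rightarrow> bool" where "cm x y \<longleftrightarrow> x * y = y * x"

lemma cm_1[simp]: "cm x 1" and cm_0[simp]: "cm x 0" by (simp_all add: cm_def)
lemma cm_mult: "cm x y \<Longrightarrow> cm x w \<Longrightarrow> cm x (y * w)"
  unfolding cm_def by (metis mult.assoc)
lemma cm_add: "cm x y \<Longrightarrow> cm x w \<Longrightarrow> cm x (y + w)"
  unfolding cm_def by (simp add: algebra_simps)
lemma cm_diff: "cm x y \<Longrightarrow> cm x w \<Longrightarrow> cm x (y - w)"
  unfolding cm_def by (simp add: algebra_simps)
lemma cm_scale: "cm x y \<Longrightarrow> cm (x::'a::real_algebra_1) (r *\<^sub>R y)"
  unfolding cm_def by simp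
lemma cm_pow: "cm x y \<Longrightarrow> cm x (y ^ n)"
  by (induction n) (auto intro: cm_mult)
lemma cm_sym: "cm x y \<Longrightarrow> cm y x" unfolding cm_def by simp

fun pf :: "'a::real_algebra_1 \<Rightarrow> 'a \<Rightarrow> real \<Rightarrow> nat \<Rightarrow> 'a" where
  "pf A B t 0 = 1"
| "pf A B t (Suc n) = (B - (t ^ n) *\<^sub>R A) * pf A B t n"

lemma cm_pf: "cm X A \<Longrightarrow> cm X B \<Longrightarrow> cm X (pf A B t n)"
  by (induction n) (auto intro!: cm_mult cm_diff cm_scale)

lemma F_ident:
  fixes A B :: "'a::real_algebra_1" and c :: "nat \<Rightarrow> nat \<Rightarrow> real"
  assumes AB: "cm A B"
    and c0: "\<And>N. c N 0 = 1" and cz: "\<And>N k. N < k \<Longrightarrow> c N k = 0"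
    and cP: "\<And>N k. c (Suc N) (Suc k) = c N k + t ^ Suc k * c N (Suc k)"
  shows "(\<Sum>n\<le>N. c N n *\<^sub>R (A ^ (N - n) * pf A B t n)) = B ^ N"
proof (induction N)
  case 0 then show ?case by (simp add: c0)
next
  case (Suc N)
  have BA: "\<And>m. B * A ^ m = A ^ m * B" using cm_pow[OF cm_sym[OF AB]] by (simp add: cm_def)
  have trm: "B * (A ^ (N - n) * pf A B t n) = A ^ (N - n) * pf A B t (Suc n) + t ^ n *\<^sub>R (A ^ Suc (N - n) * pf A B t n)" for n
  proof -
    have "B * (A ^ (N - n) * pf A B t n) = A ^ (N - n) * (B * pf A B t n)"
      by (metis BA mult.assoc)
    also have "B * pf A B t n = pf A B t (Suc n) + t ^ n *\<^sub>R (A * pf A B t n)"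
      by (simp add: algebra_simps)
    finally show ?thesis by (simp add: algebra_simps power_Suc2 del: power_Suc)
  qed
  have "B ^ Suc N = B * (\<Sum>n\<le>N. c N n *\<^sub>R (A ^ (N - n) * pf A B t n))"
    using Suc by simp
  also have "\<dots> = (\<Sum>n\<le>N. c N n *\<^sub>R (A ^ (N - n) * pf A B t (Suc n)))
      + (\<Sum>n\<le>N. (c N n * t ^ n) *\<^sub>R (A ^ Suc (N - n) * pf A B t n))"
    by (simp add: sum_distrib_left trm scaleR_add_right sum.distrib)
  also have "(\<Sum>n\<le>N. (c N n * t ^ n) *\<^sub>R (A ^ Suc (N - n) * pf A B t n))
      = (\<Sum>n\<le>Suc N. (c N n * t ^ n) *\<^sub>R (A ^ Suc (N - n) * pf A B t n))"
    by (simp add: cz)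
  also have "\<dots> = A ^ Suc N + (\<Sum>k\<le>N. (t ^ Suc k * c N (Suc k)) *\<^sub>R (A ^ (N - k) * pf A B t (Suc k)))"
  proof -
    have eq: "(c N (Suc k) * t ^ Suc k) *\<^sub>R (A ^ Suc (N - Suc k) * pf A B t (Suc k))
        = (t ^ Suc k * c N (Suc k)) *\<^sub>R (A ^ (N - k) * pf A B t (Suc k))" if "k \<le> N" for k
    proof (cases "k < N")
      case True
      then have "Suc (N - Suc k) = N - k" by simp
      then show ?thesis by (simp only: mult.commute)
    next
      case False then show ?thesis by (simp add: cz)
    qed
    show ?thesis unfolding sum.atMost_Suc_shift
      apply (simp add: c0 del: power_Suc pf.simps)
      apply (simp only: pf.simps(1) mult_1_right)
      by (rule arg_cong[where f="\<lambda>x. _ + x"], rule sum.cong) (simp_all add: eq del: power_Suc pf.simps)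
  qed
  finally have "B ^ Suc N = A ^ Suc N + ((\<Sum>k\<le>N. c N k *\<^sub>R (A ^ (N - k) * pf A B t (Suc k)))
     + (\<Sum>k\<le>N. (t ^ Suc k * c N (Suc k)) *\<^sub>R (A ^ (N - k) * pf A B t (Suc k))))"
    by (simp add: algebra_simps)
  also have "\<dots> = A ^ Suc N + (\<Sum>k\<le>N. c (Suc N) (Suc k) *\<^sub>R (A ^ (Suc N - Suc k) * pf A B t (Suc k)))"
    by (simp add: cP sum.distrib[symmetric] scaleR_add_left del: power_Suc)
  also have "\<dots> = (\<Sum>n\<le>Suc N. c (Suc N) n *\<^sub>R (A ^ (Suc N - n) * pf A B t n))"
    unfolding sum.atMost_Suc_shift by (simp add: c0)
  finally show ?case by simp
qed

definition cof :: "real \<Rightarrow> nat \<Rightarrow> nat \<Rightarrow> real" where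
  "cof q a b = qfact q (a + b) / (qfact q a * qfact q b) * inverse q ^ (a * b)"

definition cc :: "real \<Rightarrow> nat \<Rightarrow> nat \<Rightarrow> real" where
  "cc q N k = (if k \<le> N then cof q k (N - k) else 0)"

lemma qnum_pos: assumes "0 < q" "q < 1" "1 \<le> k" shows "0 < qnum q k"
proof -
  have iq: "1 < inverse q" using assms by (simp add: one_less_inverse)
  have "q ^ k < 1" using assms by (simp add: power_less_one_iff)
  moreover have "1 < inverse q ^ k" using iq assms(3) by (simp add: one_less_power)
  moreover have "q < inverse q" using assms iq by linarith
  ultimately show ?thesis unfolding qnum_def by (intro divide_neg_neg) auto
qed

lemma qfact_pos: assumes "0 < q" "q < 1" shows "0 < qfact q n"
  unfolding qfact_def using qnum_pos[OF assms] by (intro prod_pos) auto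

lemma qfact_Suc: "qfact q (Suc n) = qfact q n * qnum q (Suc n)"
  unfolding qfact_def by (simp add: prod.cl_ivl_Suc)

lemma qfact_0[simp]: "qfact q 0 = 1" unfolding qfact_def by simp

lemma qnum_add: assumes "0 < q" "q < 1"
  shows "qnum q (a + b) = q ^ b * qnum q a + inverse q ^ a * qnum q b"
proof -
  have "1 < inverse q" using assms by (simp add: one_less_inverse)
  then have ne: "q - inverse q \<noteq> 0" using assms by linarith
  have m: "\<And>n. q ^ n * inverse q ^ n = 1" using assms by (simp add: power_mult_distrib[symmetric])
  have num: "q ^ (a + b) - inverse q ^ (a + b) = q ^ b * (q ^ a - inverse q ^ a) + inverse q ^ a * (q ^ b - inverse q ^ b)"
    using m[of a] m[of b] by (simp add: power_add algebra_simps)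
  show ?thesis by (simp only: qnum_def num add_divide_distrib times_divide_eq_right)
qed

lemma cof_pascal: assumes "0 < q" "q < 1"
  shows "cof q (Suc k) (Suc b) = cof q k (Suc b) + (inverse q ^ 2) ^ Suc k * cof q (Suc k) b"
proof -
  define w where "w = inverse q"
  define F where "F = qfact q (Suc (k + b))"
  define G where "G = qfact q k"
  define H where "H = qfact q b"
  define \<alpha> where "\<alpha> = qnum q (Suc k)"
  define \<beta> where "\<beta> = qnum q (Suc b)"
  have pos: "F > 0" "G > 0" "H > 0" "\<alpha> > 0" "\<beta> > 0"
    using qfact_pos[OF assms] qnum_pos[OF assms] by (auto simp: F_def G_def H_def \<alpha>_def \<beta>_def)
  have m: "\<And>n. w ^ n * q ^ n = 1" using assms by (simp add: w_def power_mult_distrib[symmetric])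
  have top: "qfact q (Suc k + Suc b) = F * (q ^ Suc b * \<alpha> + w ^ Suc k * \<beta>)"
    using qnum_add[OF assms, of "Suc k" "Suc b"]
    by (simp add: F_def \<alpha>_def \<beta>_def w_def qfact_Suc)
  have P1: "w ^ (Suc k * Suc b) * q ^ Suc b = w ^ (k * Suc b)"
  proof -
    have e: "Suc k * Suc b = k * Suc b + Suc b" by simp
    have "w ^ (Suc k * Suc b) = w ^ (k * Suc b) * w ^ Suc b" by (simp only: e power_add)
    then have "w ^ (Suc k * Suc b) * q ^ Suc b = w ^ (k * Suc b) * (w ^ Suc b * q ^ Suc b)"
      by (simp only: mult.assoc)
    then show ?thesis by (simp only: m mult_1_right)
  qed
  have P2: "w ^ (Suc k * Suc b) * w ^ Suc k = (w ^ 2) ^ Suc k * w ^ (Suc k * b)"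
  proof -
    have e: "Suc k * Suc b + Suc k = 2 * Suc k + Suc k * b" by (simp add: algebra_simps)
    show ?thesis by (simp only: power_add[symmetric] power_mult[symmetric] e)
  qed
  have "cof q (Suc k) (Suc b) = F * (q ^ Suc b * \<alpha> + w ^ Suc k * \<beta>) / (G * \<alpha> * (H * \<beta>)) * w ^ (Suc k * Suc b)"
    unfolding cof_def using top by (simp add: qfact_Suc G_def H_def \<alpha>_def \<beta>_def w_def)
  also have "\<dots> = F / (G * H * \<beta>) * (w ^ (Suc k * Suc b) * q ^ Suc b) + F / (G * \<alpha> * H) * (w ^ (Suc k * Suc b) * w ^ Suc k)"
    using pos by (simp add: field_simps)
  also have "\<dots> = F / (G * H * \<beta>) * w ^ (k * Suc b) + (w ^ 2) ^ Suc k * (F / (G * \<alpha> * H) * w ^ (Suc k * b))"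
    by (simp only: P1 P2) simp
  also have "\<dots> = cof q k (Suc b) + (inverse q ^ 2) ^ Suc k * cof q (Suc k) b"
    unfolding cof_def by (simp add: qfact_Suc G_def H_def \<alpha>_def \<beta>_def w_def F_def mult.commute mult.left_commute)
  finally show ?thesis .
qed

lemma cof_0: assumes "0 < q" "q < 1" shows "cof q a 0 = 1" "cof q 0 a = 1"
  unfolding cof_def using qfact_pos[OF assms, of a] by auto

lemma cc_props: assumes "0 < q" "q < 1"
  shows "cc q N 0 = 1" "N < k \<Longrightarrow> cc q N k = 0"
    "cc q (Suc N) (Suc k) = cc q N k + (inverse q ^ 2) ^ Suc k * cc q N (Suc k)"
proof -
  show "cc q N 0 = 1" unfolding cc_def using cof_0[OF assms] by simp
  show "N < k \<Longrightarrow> cc q N k = 0" unfolding cc_def by simp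
  show "cc q (Suc N) (Suc k) = cc q N k + (inverse q ^ 2) ^ Suc k * cc q N (Suc k)"
  proof (cases "Suc k \<le> N")
    case True
    then obtain b where b: "N = Suc k + b" using le_Suc_ex by blast
    show ?thesis using True cof_pascal[OF assms, of k b] unfolding cc_def b by simp
  next
    case False
    then show ?thesis unfolding cc_def using cof_0[OF assms] by auto
  qed
qed


definition MI :: "nat \<Rightarrow> nat \<Rightarrow> (nat \<Rightarrow> nat) set" where
  "MI L N = {j. (\<forall>k. k \<notin> {1..L} \<longrightarrow> j k = 0) \<and> (\<Sum>k\<in>{1..L}. j k) = N}"

lemma MI_Suc: "MI (Suc L) N = (\<lambda>(n,j). j(Suc L := n)) ` (SIGMA n:{..N}. MI L (N - n))"
proof (intro equalityI subsetI)
  fix j assume j: "j \<in> MI (Suc L) N"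
  define j0 where "j0 = j(Suc L := 0)"
  have s: "(\<Sum>k\<in>{1..L}. j0 k) = (\<Sum>k\<in>{1..L}. j k)" by (rule sum.cong) (auto simp: j0_def)
  have "(\<Sum>k\<in>{1..Suc L}. j k) = N" using j by (simp add: MI_def)
  then have "(\<Sum>k\<in>{1..L}. j k) + j (Suc L) = N" by (simp add: sum.cl_ivl_Suc)
  then have "j0 \<in> MI L (N - j (Suc L))" "j (Suc L) \<le> N" using j s
    by (auto simp: MI_def j0_def)
  moreover have "j = j0(Suc L := j (Suc L))" by (auto simp: j0_def)
  ultimately show "j \<in> (\<lambda>(n,j). j(Suc L := n)) ` (SIGMA n:{..N}. MI L (N - n))"
    by (intro image_eqI[where x="(j (Suc L), j0)"]) auto
next
  fix j assume "j \<in> (\<lambda>(n,j). j(Suc L := n)) ` (SIGMA n:{..N}. MI L (N - n))"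
  then obtain n j0 where n: "n \<le> N" and j0: "j0 \<in> MI L (N - n)" and j: "j = j0(Suc L := n)" by auto
  have s: "(\<Sum>k\<in>{1..L}. j k) = (\<Sum>k\<in>{1..L}. j0 k)" by (rule sum.cong) (auto simp: j)
  show "j \<in> MI (Suc L) N" using j0 n s unfolding MI_def
    by (auto simp: sum.cl_ivl_Suc j)
qed

lemma MI_inj: "inj_on (\<lambda>(n,j). j(Suc L := n)) (SIGMA n:{..N}. MI L (N - n))"
proof (rule inj_onI, clarsimp)
  fix n j n' j' assume j: "j \<in> MI L (N - n)" and j': "j' \<in> MI L (N - n')"
    and e: "j(Suc L := n) = j'(Suc L := n')"
  have "n = n'" using fun_cong[OF e, of "Suc L"] by simp
  moreover have "j = j'"
  proof
    fix k show "j k = j' k"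
    proof (cases "k = Suc L")
      case True then show ?thesis using j j' by (simp add: MI_def)
    next
      case False then show ?thesis using fun_cong[OF e, of k] by simp
    qed
  qed
  ultimately show "n = n' \<and> j = j'" by simp
qed

lemma MI_0: "MI 0 N = (if N = 0 then {\<lambda>_. 0} else {})"
  unfolding MI_def by auto

lemma MI_finite: "finite (MI L N)"
proof (induction L arbitrary: N)
  case 0 then show ?case by (simp add: MI_0)
next
  case (Suc L) then show ?case unfolding MI_Suc by auto
qed

lemma sum_MI_Suc: "(\<Sum>j\<in>MI (Suc L) N. f j) = (\<Sum>n\<le>N. \<Sum>j\<in>MI L (N - n). f (j(Suc L := n)))"
proof -
  have "(\<Sum>j\<in>MI (Suc L) N. f j) = (\<Sum>p\<in>(SIGMA n:{..N}. MI L (N - n)). f ((\<lambda>(n,j). j(Suc L := n)) p))"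
    unfolding MI_Suc by (rule sum.reindex[OF MI_inj, unfolded comp_def])
  also have "\<dots> = (\<Sum>n\<le>N. \<Sum>j\<in>MI L (N - n). f (j(Suc L := n)))"
    by (subst sum.Sigma) (auto simp: MI_finite intro!: sum.cong)
  finally show ?thesis .
qed

definition qm :: "real \<Rightarrow> nat \<Rightarrow> (nat \<Rightarrow> nat) \<Rightarrow> real" where
  "qm q L j = qfact q (\<Sum>r\<in>{1..L}. j r) / (\<Prod>r\<in>{1..L}. qfact q (j r))
     * inverse q ^ (\<Sum>r\<in>{1..L}. \<Sum>s\<in>{r<..L}. j r * j s)"

lemma qm_0: "qm q 0 j = 1" unfolding qm_def by simp

lemma qm_Suc: assumes "0 < q" "q < 1" "j \<in> MI L (N - n)" "n \<le> N"
  shows "qm q (Suc L) (j(Suc L := n)) = qm q L j * cc q N n"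
proof -
  let ?j = "j(Suc L := n)"
  have sj: "(\<Sum>r\<in>{1..L}. j r) = N - n" using assms(3) by (simp add: MI_def)
  have eqL: "\<And>r. r \<in> {1..L} \<Longrightarrow> ?j r = j r" by auto
  have s1: "(\<Sum>r\<in>{1..Suc L}. ?j r) = N"
    using sj assms(4) by (simp add: sum.cl_ivl_Suc sum.cong[OF refl eqL])
  have p1: "(\<Prod>r\<in>{1..Suc L}. qfact q (?j r)) = (\<Prod>r\<in>{1..L}. qfact q (j r)) * qfact q n"
    by (simp add: prod.cl_ivl_Suc prod.cong[OF refl eqL])
  have inner: "(\<Sum>s\<in>{r<..Suc L}. ?j r * ?j s) = (\<Sum>s\<in>{r<..L}. j r * j s) + j r * n"
    if r: "r \<in> {1..L}" for r
  proof -
    have "{r<..Suc L} = insert (Suc L) {r<..L}" using r by auto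
    moreover have "(\<Sum>s\<in>{r<..L}. ?j r * ?j s) = (\<Sum>s\<in>{r<..L}. j r * j s)"
      using r by (intro sum.cong) auto
    ultimately show ?thesis using r by (simp add: add.commute)
  qed
  have e1: "(\<Sum>r\<in>{1..Suc L}. \<Sum>s\<in>{r<..Suc L}. ?j r * ?j s)
      = (\<Sum>r\<in>{1..L}. \<Sum>s\<in>{r<..L}. j r * j s) + n * (N - n)"
  proof -
    have "(\<Sum>r\<in>{1..Suc L}. \<Sum>s\<in>{r<..Suc L}. ?j r * ?j s)
        = (\<Sum>r\<in>{1..L}. \<Sum>s\<in>{r<..Suc L}. ?j r * ?j s)"
      by (simp add: sum.cl_ivl_Suc)
    also have "\<dots> = (\<Sum>r\<in>{1..L}. (\<Sum>s\<in>{r<..L}. j r * j s) + j r * n)"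
      by (rule sum.cong[OF refl inner])
    also have "\<dots> = (\<Sum>r\<in>{1..L}. \<Sum>s\<in>{r<..L}. j r * j s) + n * (N - n)"
    proof -
      have "(\<Sum>r\<in>{1..L}. j r * n) = (N - n) * n" by (simp only: sum_distrib_right[symmetric] sj)
      then show ?thesis by (simp add: sum.distrib)
    qed
    finally show ?thesis .
  qed
  have fp: "qfact q (N - n) > 0" "qfact q n > 0" using qfact_pos[OF assms(1,2)] by auto
  show ?thesis
    unfolding qm_def s1 p1 e1 sj cc_def cof_def using assms(4) fp
    by (simp add: power_add field_simps)
qed


locale sph =
  fixes q :: real and l :: nat and st :: "'a::real_algebra_1 \<Rightarrow> 'a" and z :: "nat \<Rightarrow> 'a"
  assumes q0: "0 < q" and q1: "q < 1" and star: "is_star st" and rels: "sphere_rels q l st z"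
begin

lemma st_add: "st (x + y) = st x + st y" and st_scale: "st (r *\<^sub>R x) = r *\<^sub>R st x"
  and st_mult: "st (x * y) = st y * st x" and st_st: "st (st x) = x" and st_1: "st 1 = 1"
  using star unfolding is_star_def by auto

lemma st_0: "st 0 = 0"
  using st_add[of 0 0] by simp

lemma st_diff: "st (x - y) = st x - st y"
  using st_add[of "x - y" y] by (simp add: algebra_simps)

lemma st_sum: "finite S \<Longrightarrow> st (sum f S) = (\<Sum>x\<in>S. st (f x))"
  by (induction S rule: finite_induct) (auto simp: st_0 st_add)

lemma st_pow: "st (x ^ n) = st x ^ n"
proof (induction n)
  case 0 then show ?case by (simp add: st_1)
next
  case (Suc n) then show ?case by (simp add: st_mult power_commutes)
qed

lemma R1: "i \<in> {1..l+1} \<Longrightarrow> j \<in> {1..l+1} \<Longrightarrow> i < j \<Longrightarrow> z i * z j = q *\<^sub>R (z j * z i)"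
  and R2: "i \<in> {1..l+1} \<Longrightarrow> j \<in> {1..l+1} \<Longrightarrow> i \<noteq> j \<Longrightarrow> st (z i) * z j = q *\<^sub>R (z j * st (z i))"
  and R3: "st (z 1) * z 1 = z 1 * st (z 1)"
  and R4: "i \<in> {1..l} \<Longrightarrow> st (z (Suc i)) * z (Suc i) - z (Suc i) * st (z (Suc i))
          = (1 - q\<^sup>2) *\<^sub>R (\<Sum>j\<in>{1..i}. z j * st (z j))"
  and R5: "(\<Sum>i\<in>{1..l+1}. z i * st (z i)) = 1"
  using rels unfolding sphere_rels_def by auto

definition AA :: "nat \<Rightarrow> 'a" where "AA i = (\<Sum>k\<in>{1..i}. z k * st (z k))"

lemma AA_0: "AA 0 = 0" unfolding AA_def by simp

lemma AA_Suc: "AA (Suc i) = AA i + z (Suc i) * st (z (Suc i))"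
  unfolding AA_def by (simp add: sum.cl_ivl_Suc)

lemma st_AA: "st (AA i) = AA i"
  unfolding AA_def by (simp add: st_sum st_mult st_st)

lemma F1: assumes "L \<le> l" "k \<in> {1..L}"
  shows "z k * st (z k) * z (Suc L) = q\<^sup>2 *\<^sub>R (z (Suc L) * (z k * st (z k)))"
proof -
  have e1: "st (z k) * z (Suc L) = q *\<^sub>R (z (Suc L) * st (z k))" using assms by (intro R2) auto
  have e2: "z k * z (Suc L) = q *\<^sub>R (z (Suc L) * z k)" using assms by (intro R1) auto
  have "z k * st (z k) * z (Suc L) = z k * (st (z k) * z (Suc L))" by (simp add: mult.assoc)
  also have "\<dots> = q *\<^sub>R ((z k * z (Suc L)) * st (z k))" by (simp add: e1 mult.assoc)
  also have "\<dots> = q *\<^sub>R ((q *\<^sub>R (z (Suc L) * z k)) * st (z k))" by (simp only: e2)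
  also have "\<dots> = q\<^sup>2 *\<^sub>R (z (Suc L) * (z k * st (z k)))" by (simp add: mult.assoc power2_eq_square)
  finally show ?thesis .
qed

lemma F2: assumes "L \<le> l" shows "AA L * z (Suc L) = q\<^sup>2 *\<^sub>R (z (Suc L) * AA L)"
  unfolding AA_def sum_distrib_right sum_distrib_left scaleR_sum_right
  by (rule sum.cong[OF refl]) (rule F1[OF assms])

lemma F2': assumes "L \<le> l" shows "st (z (Suc L)) * AA L = q\<^sup>2 *\<^sub>R (AA L * st (z (Suc L)))"
  using arg_cong[OF F2[OF assms], of st] by (simp add: st_mult st_scale st_AA)

lemma F3: assumes "L \<le> l" shows "AA (Suc L) * z (Suc L) = z (Suc L) * AA (Suc L)"
proof (cases "L = 0")
  case True
  then show ?thesis using R3 by (simp add: AA_Suc AA_0 mult.assoc)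
next
  case False
  let ?Z = "z (Suc L)"
  have "st ?Z * ?Z - ?Z * st ?Z = (1 - q\<^sup>2) *\<^sub>R AA L"
    using R4[of L] assms False unfolding AA_def by auto
  then have e: "st ?Z * ?Z = ?Z * st ?Z + (1 - q\<^sup>2) *\<^sub>R AA L" by (simp add: algebra_simps)
  have "AA (Suc L) * ?Z = AA L * ?Z + ?Z * (st ?Z * ?Z)" by (simp add: AA_Suc algebra_simps)
  also have "\<dots> = q\<^sup>2 *\<^sub>R (?Z * AA L) + ?Z * (?Z * st ?Z) + (1 - q\<^sup>2) *\<^sub>R (?Z * AA L)"
    by (simp add: F2[OF assms] e algebra_simps)
  also have "\<dots> = ?Z * AA L + ?Z * (?Z * st ?Z)"
    by (simp add: algebra_simps scaleR_left_diff_distrib)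
  also have "\<dots> = ?Z * AA (Suc L)" by (simp add: AA_Suc algebra_simps)
  finally show ?thesis .
qed

lemma F7: "i \<le> Suc l \<Longrightarrow> k \<in> {1..i} \<Longrightarrow> cm (AA i) (z k)"
proof (induction i)
  case 0 then show ?case by simp
next
  case (Suc i)
  show ?case
  proof (cases "k = Suc i")
    case True then show ?thesis using F3[of i] Suc.prems by (simp add: cm_def)
  next
    case False
    then have k: "k \<in> {1..i}" using Suc.prems by auto
    have ih: "cm (AA i) (z k)" using Suc k by simp
    have e1: "st (z (Suc i)) * z k = q *\<^sub>R (z k * st (z (Suc i)))" using Suc.prems k by (intro R2) auto
    have e2: "z k * z (Suc i) = q *\<^sub>R (z (Suc i) * z k)" using Suc.prems k by (intro R1) auto
    have "z (Suc i) * st (z (Suc i)) * z k = q *\<^sub>R (z (Suc i) * z k * st (z (Suc i)))"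
      by (simp add: mult.assoc e1)
    also have "\<dots> = z k * (z (Suc i) * st (z (Suc i)))"
      by (simp add: mult.assoc[symmetric] e2)
    finally have "cm (z (Suc i) * st (z (Suc i))) (z k)" by (simp add: cm_def)
    then show ?thesis using ih unfolding AA_Suc cm_def by (simp add: distrib_left distrib_right)
  qed
qed

lemma F7': assumes "i \<le> Suc l" "k \<in> {1..i}" shows "cm (AA i) (st (z k))"
  using arg_cong[OF F7[OF assms, unfolded cm_def], of st] by (simp add: cm_def st_mult st_AA)

lemma F6: assumes "L \<le> l" shows "cm (AA L) (AA (Suc L))"
proof -
  let ?Z = "z (Suc L)"
  have "AA L * (?Z * st ?Z) = q\<^sup>2 *\<^sub>R (?Z * AA L * st ?Z)"
    by (simp add: mult.assoc[symmetric] F2[OF assms])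
  also have "\<dots> = ?Z * st ?Z * AA L" by (simp add: mult.assoc F2'[OF assms])
  finally show ?thesis unfolding AA_Suc cm_def by (simp add: algebra_simps)
qed

definition mono :: "nat \<Rightarrow> (nat \<Rightarrow> nat) \<Rightarrow> 'a" where
  "mono L j = prod_list (map (\<lambda>k. z k ^ j k) [1..<L+1])"

lemma mono_0: "mono 0 j = 1" unfolding mono_def by simp

lemma mono_Suc: "mono (Suc L) j = mono L j * z (Suc L) ^ j (Suc L)"
  unfolding mono_def by simp

lemma mono_upd: "mono L (j(Suc L := n)) = mono L j"
  unfolding mono_def by (rule arg_cong[where f=prod_list]) auto

lemma cm_st_mono: "(\<And>k. k \<in> {1..L} \<Longrightarrow> cm X (st (z k))) \<Longrightarrow> cm X (st (mono L j))"
proof (induction L)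
  case 0 then show ?case by (simp add: mono_0 st_1)
next
  case (Suc L)
  then show ?case unfolding mono_Suc st_mult st_pow
    by (intro cm_mult cm_pow) auto
qed


lemma Pn: assumes "L \<le> l"
  shows "z (Suc L) ^ n * st (z (Suc L)) ^ n = pf (AA L) (AA (Suc L)) (inverse q ^ 2) n"
proof -
  let ?Z = "z (Suc L)" and ?A = "AA L" and ?B = "AA (Suc L)" and ?t = "inverse q ^ 2"
  have tq: "?t * q\<^sup>2 = 1" using q0 by (simp add: power_mult_distrib[symmetric])
  have F4: "?Z * ?A = ?t *\<^sub>R (?A * ?Z)" using tq by (simp add: F2[OF assms])
  have pA: "?Z ^ n * ?A = ?t ^ n *\<^sub>R (?A * ?Z ^ n)" for n
  proof (induction n)
    case 0 then show ?case by simp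
  next
    case (Suc n)
    have "?Z ^ Suc n * ?A = ?Z * (?Z ^ n * ?A)" by (simp add: mult.assoc)
    also have "\<dots> = ?t ^ n *\<^sub>R ((?Z * ?A) * ?Z ^ n)" by (simp add: Suc mult.assoc)
    also have "\<dots> = ?t ^ Suc n *\<^sub>R (?A * ?Z ^ Suc n)" by (simp add: F4 mult.assoc)
    finally show ?case .
  qed
  have pB: "?Z ^ n * ?B = ?B * ?Z ^ n" for n
    using cm_pow[of ?B ?Z n] F3[OF assms] by (simp add: cm_def)
  show ?thesis
  proof (induction n)
    case 0 then show ?case by simp
  next
    case (Suc n)
    have "?Z ^ Suc n * st ?Z ^ Suc n = ?Z ^ n * (?Z * st ?Z) * st ?Z ^ n"
      by (simp only: power_Suc2[of ?Z] power_Suc[of "st ?Z"] mult.assoc)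
    also have "?Z * st ?Z = ?B - ?A" by (simp add: AA_Suc)
    also have "?Z ^ n * (?B - ?A) = (?B - ?t ^ n *\<^sub>R ?A) * ?Z ^ n"
      by (simp add: algebra_simps pA pB)
    finally show ?case by (simp only: mult.assoc Suc.IH pf.simps(2))
  qed
qed

definition S :: "nat \<Rightarrow> nat \<Rightarrow> 'a" where
  "S L N = (\<Sum>j\<in>MI L N. qm q L j *\<^sub>R (mono L j * st (mono L j)))"

lemma main: "L \<le> Suc l \<Longrightarrow> S L N = AA L ^ N"
proof (induction L arbitrary: N)
  case 0
  then show ?case by (cases N) (simp_all add: S_def MI_0 qm_0 mono_0 st_1 AA_0)
next
  case (Suc L)
  then have L: "L \<le> l" by simp
  let ?Z = "z (Suc L)" and ?A = "AA L" and ?B = "AA (Suc L)" and ?t = "inverse q ^ 2"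
  let ?P = "\<lambda>n. pf ?A ?B ?t n"
  have cmP: "cm (?P n) (st (mono L j))" for n j
  proof (rule cm_st_mono)
    fix k assume k: "k \<in> {1..L}"
    have "cm (st (z k)) ?A" using F7'[of L k] k L cm_sym by auto
    moreover have "cm (st (z k)) ?B" using F7'[of "Suc L" k] k L cm_sym by auto
    ultimately show "cm (?P n) (st (z k))" using cm_sym cm_pf by blast
  qed
  have trm: "qm q (Suc L) (j(Suc L := n)) *\<^sub>R (mono (Suc L) (j(Suc L := n)) * st (mono (Suc L) (j(Suc L := n))))
      = cc q N n *\<^sub>R ((qm q L j *\<^sub>R (mono L j * st (mono L j))) * ?P n)"
    if "j \<in> MI L (N - n)" "n \<le> N" for j n
  proof -
    have "mono (Suc L) (j(Suc L := n)) * st (mono (Suc L) (j(Suc L := n)))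
        = mono L j * (?Z ^ n * st ?Z ^ n) * st (mono L j)"
      by (simp add: mono_Suc mono_upd st_mult st_pow mult.assoc)
    also have "\<dots> = mono L j * st (mono L j) * ?P n"
      using cmP[of n j] by (simp add: Pn[OF L] cm_def mult.assoc)
    finally show ?thesis using qm_Suc[OF q0 q1 that] by (simp add: mult.commute)
  qed
  have "S (Suc L) N = (\<Sum>n\<le>N. \<Sum>j\<in>MI L (N - n). cc q N n *\<^sub>R ((qm q L j *\<^sub>R (mono L j * st (mono L j))) * ?P n))"
    unfolding S_def sum_MI_Suc by (intro sum.cong refl) (simp add: trm)
  also have "\<dots> = (\<Sum>n\<le>N. cc q N n *\<^sub>R (S L (N - n) * ?P n))"
    unfolding S_def by (simp add: scaleR_sum_right sum_distrib_right)
  also have "\<dots> = (\<Sum>n\<le>N. cc q N n *\<^sub>R (?A ^ (N - n) * ?P n))"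
    using Suc.IH L by simp
  also have "\<dots> = ?B ^ N"
    using cc_props[OF q0 q1] by (intro F_ident F6[OF L]) auto
  finally show ?case .
qed


lemma final: "(\<Sum>j\<in>multi_indices l N. scaleR (qmultinom q l j) (monom l z j * st (monom l z j))) = 1"
proof -
  have "multi_indices l N = MI (Suc l) N" unfolding multi_indices_def MI_def by simp
  moreover have "\<And>j. qmultinom q l j = qm q (Suc l) j" unfolding qmultinom_def qm_def by simp
  moreover have "\<And>j. monom l z j = mono (Suc l) j" unfolding monom_def mono_def by simp
  moreover have "AA (Suc l) = 1" using R5 unfolding AA_def by simp
  ultimately show ?thesis using main[of "Suc l" N] unfolding S_def by simp
qed

end

theorem lemma4p2:
  fixes q :: real and l N :: nat and st :: "'a::real_algebra_1 \<Rightarrow> 'a" and z :: "nat \<Rightarrow> 'a"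
  assumes "0 < q" "q < 1" "l \<ge> 1"
    and "is_star st" and "sphere_rels q l st z"
  shows "(\<Sum>j\<in>multi_indices l N. scaleR (qmultinom q l j) (monom l z j * st (monom l z j))) = 1"
proof -
  interpret sph q l st z using assms by unfold_locales auto
  show ?thesis by (rule final)
qed

end
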